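(* Let $\mathcal H$ be a Hilbert space and $N\geq 1$, and let $\mathcal O^N(\mathcal H)$ be the convex set of $N$-outcome POVMs $\mathsf M=(M_1,\dots,M_N)$ on $\mathcal H$. Then the boundary $\partial\mathcal O^N(\mathcal H)$ consists exactly of those $\mathsf M$ for which $0$ lies in the spectrum of $M_j$ for some $j\in\{1,\dots,N\}$.
   Context: An $N$-outcome POVM on $\mathcal H$ is a collection of positive operators $M_1,\dots,M_N\in\mathcal L(\mathcal H)$ with $\sum_j M_j=I$; convex combinations are taken componentwise. For elements of a convex set $Z$, $x\leq_C y$ means $y=tx+(1-t)z$ for some $z\in Z$ and $0<t\leq 1$; the boundary $\partial Z$ is the set of $y\in Z$ for which some $x\in Z$ has $x\not\leq_C y$. *)

theory Defs
  imports "HOL-Analysis.Analysis"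
begin

text \<open>A complex Hilbert space is modelled as a real Hilbert space
('a :: {real_inner, complete_space}) together with a complex structure J
(multiplication by i): an orthogonal bounded real-linear map with J o J = -id.\<close>

definition complex_structure :: "('a::real_inner \<Rightarrow>\<^sub>L 'a) \<Rightarrow> bool" where
  "complex_structure J \<longleftrightarrow>
     (\<forall>x. J (J x) = - x) \<and> (\<forall>x y. inner (J x) (J y) = inner x y)"

text \<open>Complex inner product, linear in the second argument.\<close>
definition cinner :: "('a::real_inner \<Rightarrow>\<^sub>L 'a) \<Rightarrow> 'a \<Rightarrow> 'a \<Rightarrow> complex" where
  "cinner J x y = Complex (inner x y) (inner x (J y))"

definition cpx_linear :: "('a::real_normed_vector \<Rightarrow>\<^sub>L 'a) \<Rightarrow> ('a \<Rightarrow>\<^sub>L 'a) \<Rightarrow> bool" where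
  "cpx_linear J A \<longleftrightarrow> A o\<^sub>L J = J o\<^sub>L A"

definition positive_op :: "('a::real_inner \<Rightarrow>\<^sub>L 'a) \<Rightarrow> ('a \<Rightarrow>\<^sub>L 'a) \<Rightarrow> bool" where
  "positive_op J A \<longleftrightarrow> cpx_linear J A \<and>
     (\<forall>x. Im (cinner J x (A x)) = 0 \<and> Re (cinner J x (A x)) \<ge> 0)"

definition cscalar :: "('a::real_normed_vector \<Rightarrow>\<^sub>L 'a) \<Rightarrow> complex \<Rightarrow> ('a \<Rightarrow>\<^sub>L 'a)" where
  "cscalar J c = Re c *\<^sub>R id_blinfun + Im c *\<^sub>R J"

definition op_invertible :: "('a::real_normed_vector \<Rightarrow>\<^sub>L 'a) \<Rightarrow> ('a \<Rightarrow>\<^sub>L 'a) \<Rightarrow> bool" where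
  "op_invertible J A \<longleftrightarrow>
     (\<exists>B. cpx_linear J B \<and> B o\<^sub>L A = id_blinfun \<and> A o\<^sub>L B = id_blinfun)"

definition op_spectrum :: "('a::real_normed_vector \<Rightarrow>\<^sub>L 'a) \<Rightarrow> ('a \<Rightarrow>\<^sub>L 'a) \<Rightarrow> complex set" where
  "op_spectrum J A = {c. \<not> op_invertible J (A - cscalar J c)}"

text \<open>N-outcome POVMs, represented as functions nat => operators, indexed by 1..N
and set to 0 outside 1..N.\<close>
definition povms :: "('a::real_inner \<Rightarrow>\<^sub>L 'a) \<Rightarrow> nat \<Rightarrow> (nat \<Rightarrow> ('a \<Rightarrow>\<^sub>L 'a)) set" where
  "povms J N = {M. (\<forall>j\<in>{1..N}. positive_op J (M j)) \<and>
                   (\<Sum>j=1..N. M j) = id_blinfun \<and>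
                   (\<forall>j. j \<notin> {1..N} \<longrightarrow> M j = 0)}"

definition leC :: "(nat \<Rightarrow> ('a::real_normed_vector \<Rightarrow>\<^sub>L 'a)) set \<Rightarrow>
                   (nat \<Rightarrow> ('a \<Rightarrow>\<^sub>L 'a)) \<Rightarrow> (nat \<Rightarrow> ('a \<Rightarrow>\<^sub>L 'a)) \<Rightarrow> bool" where
  "leC Z x y \<longleftrightarrow> (\<exists>z\<in>Z. \<exists>t::real. 0 < t \<and> t \<le> 1 \<and>
                    (\<forall>j. y j = t *\<^sub>R x j + (1 - t) *\<^sub>R z j))"

definition cboundary :: "(nat \<Rightarrow> ('a::real_normed_vector \<Rightarrow>\<^sub>L 'a)) set \<Rightarrow>
                         (nat \<Rightarrow> ('a \<Rightarrow>\<^sub>L 'a)) set" where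
  "cboundary Z = {y\<in>Z. \<exists>x\<in>Z. \<not> leC Z x y}"

end

theory Submission
  imports Defs
begin

lemma cpx_linear_iff: "cpx_linear J A \<longleftrightarrow> (\<forall>v. A (J v) = J (A v))"
  unfolding cpx_linear_def by (auto intro: blinfun_eqI dest: arg_cong[where f="\<lambda>F. blinfun_apply F _"])

lemma cs_J:
  assumes "complex_structure J"
  shows "inner (J u) (J w) = inner u w" "J (J x) = - x"
  using assms unfolding complex_structure_def by auto

lemma inner_J_self:
  assumes "complex_structure J"
  shows "inner x (J x) = 0"
proof -
  have "inner x (J x) = inner (J x) (J (J x))" using cs_J(1)[OF assms, of x "J x"] by simp
  also have "\<dots> = - inner (J x) x" using cs_J[OF assms] by simp
  finally show ?thesis by (simp add: inner_commute)
qed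

lemma pos_sym:
  assumes J: "complex_structure J" and P: "positive_op J A"
  shows "inner u (A w) = inner (A u) w"
proof -
  have im: "\<And>x. inner x (J (A x)) = 0"
    using P unfolding positive_op_def cinner_def by auto
  have cl: "\<And>v. A (J v) = J (A v)" using P unfolding positive_op_def cpx_linear_iff by auto
  have pol: "\<And>u w. inner u (J (A w)) + inner w (J (A u)) = 0"
  proof -
    fix u w
    have "inner (u+w) (J (A (u+w))) = 0" by (rule im)
    then show "inner u (J (A w)) + inner w (J (A u)) = 0"
      using im[of u] im[of w]
      by (simp add: blinfun.add_right inner_add_left inner_add_right)
  qed
  have "inner (J u) (J (A w)) + inner w (J (A (J u))) = 0" by (rule pol)
  then have "inner u (A w) - inner w (A u) = 0"
    using cs_J[OF J] cl by (simp add: blinfun.minus_right)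
  then show ?thesis by (simp add: inner_commute)
qed

lemma pos_nonneg:
  assumes "positive_op J A" shows "inner x (A x) \<ge> 0"
  using assms unfolding positive_op_def cinner_def by auto

lemma cs_form:
  fixes A :: "'a::real_inner \<Rightarrow>\<^sub>L 'a"
  assumes sym: "\<And>u w. inner u (A w) = inner (A u) w"
    and nn: "\<And>x. inner x (A x) \<ge> 0"
  shows "(inner u (A w))^2 \<le> inner u (A u) * inner w (A w)"
proof -
  define a where "a = inner u (A u)"
  define b where "b = inner u (A w)"
  define c where "c = inner w (A w)"
  have q: "0 \<le> a + 2*r*b + r^2 * c" for r
  proof -
    have "0 \<le> inner (u + r *\<^sub>R w) (A (u + r *\<^sub>R w))" by (rule nn)
    also have "\<dots> = a + r * inner w (A u) + r * b + r^2 * c"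
      by (simp add: a_def b_def c_def blinfun.add_right blinfun.scaleR_right inner_add_left
          inner_add_right algebra_simps power2_eq_square)
    also have "inner w (A u) = b" using sym[of w u] by (simp add: b_def inner_commute)
    finally show ?thesis by (simp add: algebra_simps)
  qed
  have c0: "c \<ge> 0" unfolding c_def by (rule nn)
  show ?thesis
  proof (cases "c = 0")
    case True
    show ?thesis
    proof (rule ccontr)
      assume "\<not> ?thesis"
      then have "b \<noteq> 0" using True by (auto simp: b_def c_def)
      have "0 \<le> a + 2 * (-(a+1)/(2*b)) * b" using q[of "-(a+1)/(2*b)"] True by simp
      with \<open>b\<noteq>0\<close> show False by (simp add: field_simps)
    qed
  next
    case False
    then have cp: "c > 0" using c0 by simp
    have "0 \<le> a + 2 * (-b/c) * b + (-b/c)^2 * c" by (rule q)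
    then have "0 \<le> a - b^2/c" using cp by (simp add: power2_eq_square field_simps)
    then have "b^2 \<le> a * c" using cp by (simp add: field_simps)
    then show ?thesis by (simp add: a_def b_def c_def)
  qed
qed


lemma norm_bound_form:
  fixes A :: "'a::real_inner \<Rightarrow>\<^sub>L 'a"
  assumes sym: "\<And>u w. inner u (A w) = inner (A u) w"
    and nn: "\<And>x. inner x (A x) \<ge> 0"
    and k: "k \<ge> 0" and ub: "\<And>v. inner v (A v) \<le> k * (norm v)^2"
  shows "norm (A v) \<le> k * norm v"
proof -
  define w where "w = A v"
  have e: "inner w w = inner v (A w)" using sym[of v w] by (simp add: w_def)
  have "(inner v (A w))^2 \<le> inner v (A v) * inner w (A w)" by (rule cs_form[OF sym nn])
  also have "\<dots> \<le> (k * (norm v)^2) * (k * (norm w)^2)"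
    by (intro mult_mono ub nn) (use k in auto)
  also have "(k * (norm v)^2) * (k * (norm w)^2) = (k * norm v * norm w)^2"
    by (simp add: power_mult_distrib power2_eq_square)
  also have "inner v (A w) = (norm w)^2" using e by (simp add: power2_norm_eq_inner)
  finally have "((norm w)^2)^2 \<le> (k * norm v * norm w)^2" .
  then have "(norm w)^2 \<le> k * norm v * norm w"
    by (rule power2_le_imp_le) (use k in auto)
  then have "norm w * norm w \<le> (k * norm v) * norm w" by (simp add: power2_eq_square algebra_simps)
  then show ?thesis
    by (cases "norm w = 0") (use k in \<open>auto simp: w_def\<close>)
qed

lemma q_le_norm:
  fixes A :: "'a::real_inner \<Rightarrow>\<^sub>L 'a"
  shows "inner v (A v) \<le> norm A * (norm v)^2"
proof -
  have "inner v (A v) \<le> norm v * norm (A v)" by (rule norm_cauchy_schwarz)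
  also have "\<dots> \<le> norm v * (norm A * norm v)" by (intro mult_left_mono norm_blinfun) auto
  finally show ?thesis by (simp add: power2_eq_square algebra_simps)
qed


lemma coercive_invertible:
  fixes A :: "'a::{real_inner,complete_space} \<Rightarrow>\<^sub>L 'a"
  assumes sym: "\<And>u w. inner u (A w) = inner (A u) w"
    and t: "t > 0" and lb: "\<And>v. t * (norm v)^2 \<le> inner v (A v)"
  shows "\<exists>B. B o\<^sub>L A = id_blinfun \<and> A o\<^sub>L B = id_blinfun"
proof -
  define s where "s = 1 / (norm A + t)"
  have sp: "s > 0" using t by (simp add: s_def add_nonneg_pos)
  have sA: "s * norm A \<le> 1" using t by (simp add: s_def divide_le_eq add_nonneg_pos)
  have st: "s * t \<le> 1" using t by (simp add: s_def divide_le_eq add_nonneg_pos)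
  define C where "C = id_blinfun - s *\<^sub>R A"
  have Cv: "\<And>v. C v = v - s *\<^sub>R A v"
    by (simp add: C_def minus_blinfun.rep_eq scaleR_blinfun.rep_eq)
  have symC: "\<And>u w. inner u (C w) = inner (C u) w"
    using sym by (simp add: Cv inner_diff_left inner_diff_right inner_commute)
  have qC: "\<And>v. inner v (C v) = (norm v)^2 - s * inner v (A v)"
    by (simp add: Cv inner_diff_right power2_norm_eq_inner)
  have nnC: "\<And>v. inner v (C v) \<ge> 0"
  proof -
    fix v
    have "s * inner v (A v) \<le> s * (norm A * (norm v)^2)"
      using sp q_le_norm[of v A] by (intro mult_left_mono) auto
    also have "\<dots> \<le> (norm v)^2" using sA
      by (metis mult.assoc mult_left_le_one_le mult_nonneg_nonneg norm_ge_zero sp less_imp_le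
          zero_le_power2)
    finally show "inner v (C v) \<ge> 0" using qC[of v] by simp
  qed
  define k where "k = 1 - s * t"
  have k0: "k \<ge> 0" "k < 1" using st sp t by (auto simp: k_def)
  have ubC: "\<And>v. inner v (C v) \<le> k * (norm v)^2"
  proof -
    fix v
    have "s * (t * (norm v)^2) \<le> s * inner v (A v)" using lb[of v] sp by simp
    then show "inner v (C v) \<le> k * (norm v)^2" using qC[of v] by (simp add: k_def algebra_simps)
  qed
  have normC: "\<And>v. norm (C v) \<le> k * norm v"
    by (rule norm_bound_form[OF symC nnC k0(1) ubC])
  have low: "\<And>v. t * norm v \<le> norm (A v)"
  proof -
    fix v
    have "t * (norm v)^2 \<le> norm v * norm (A v)"
      using lb[of v] norm_cauchy_schwarz[of v "A v"] by linarith
    then have "(t * norm v) * norm v \<le> norm (A v) * norm v"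
      by (simp add: power2_eq_square algebra_simps)
    then show "t * norm v \<le> norm (A v)"
      by (cases "norm v = 0") (use t in auto)
  qed
  have inj: "inj A"
  proof (rule injI)
    fix x y assume "A x = A y"
    then have "A (x - y) = 0" by (simp add: blinfun.diff_right)
    then have "t * norm (x - y) \<le> 0" using low[of "x-y"] by simp
    then show "x = y" using t by (simp add: mult_le_0_iff)
  qed
  have surj: "\<exists>x. A x = y" for y
  proof -
    define f where "f x = C x + s *\<^sub>R y" for x
    have "\<forall>x x'. dist (f x) (f x') \<le> k * dist x x'"
    proof (intro allI)
      fix x x'
      have "dist (f x) (f x') = norm (C (x - x'))"
        by (simp add: f_def dist_norm blinfun.diff_right)
      also have "\<dots> \<le> k * dist x x'" using normC by (simp add: dist_norm)
      finally show "dist (f x) (f x') \<le> k * dist x x'" .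
    qed
    then obtain x where "f x = x" using banach_fix_type[OF k0] by blast
    then have "s *\<^sub>R y = s *\<^sub>R A x" by (simp add: f_def Cv algebra_simps)
    then show ?thesis using sp by auto
  qed
  define g where "g = inv A"
  have Ag: "\<And>y. A (g y) = y" using surj unfolding g_def by (metis surj_f_inv_f surjI)
  have gA: "\<And>x. g (A x) = x" using inj unfolding g_def by (simp add: inv_f_f)
  have lin: "linear g"
  proof (rule linearI)
    fix a b
    have "g (a + b) = g (A (g a + g b))" by (simp add: blinfun.add_right Ag)
    then show "g (a + b) = g a + g b" by (simp add: gA)
  next
    fix r a
    have "g (r *\<^sub>R a) = g (A (r *\<^sub>R g a))" by (simp add: blinfun.scaleR_right Ag)
    then show "g (r *\<^sub>R a) = r *\<^sub>R g a" by (simp add: gA)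
  qed
  have bl: "bounded_linear g"
  proof (rule bounded_linear_intro[where K="1/t"])
    show "\<And>x y. g (x + y) = g x + g y" using lin by (simp add: linear_add)
    show "\<And>r x. g (r *\<^sub>R x) = r *\<^sub>R g x" using lin by (simp add: linear_scale)
    fix x
    have "t * norm (g x) \<le> norm x" using low[of "g x"] by (simp add: Ag)
    then show "norm (g x) \<le> norm x * (1/t)" using t by (simp add: field_simps)
  qed
  show ?thesis
    by (rule exI[of _ "Blinfun g"])
       (auto intro!: blinfun_eqI simp: bounded_linear_Blinfun_apply[OF bl] Ag gA)
qed


lemma invertible_coercive:
  fixes A :: "'a::real_inner \<Rightarrow>\<^sub>L 'a"
  assumes sym: "\<And>u w. inner u (A w) = inner (A u) w"
    and nn: "\<And>x. inner x (A x) \<ge> 0"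
    and B: "B o\<^sub>L A = id_blinfun"
  shows "\<exists>c>0. \<forall>v. c * (norm v)^2 \<le> inner v (A v)"
proof -
  have k1: "(norm (A v))^2 \<le> norm A * inner v (A v)" for v
  proof -
    define w where "w = A v"
    have e: "inner v (A w) = (norm w)^2"
      using sym[of v w] by (simp add: w_def power2_norm_eq_inner)
    have "((norm w)^2)^2 \<le> inner v (A v) * inner w (A w)"
      using cs_form[OF sym nn, of v w] e by simp
    also have "\<dots> \<le> inner v (A v) * (norm A * (norm w)^2)"
      by (intro mult_left_mono q_le_norm nn)
    finally have "(norm w)^2 * (norm w)^2 \<le> (norm A * inner v (A v)) * (norm w)^2"
      by (simp add: power2_eq_square algebra_simps)
    moreover have "(norm w)^2 > 0 \<or> (norm w)^2 = 0" by auto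
    ultimately show ?thesis
      using mult_right_le_imp_le[of "(norm w)^2" "(norm w)^2" "norm A * inner v (A v)"]
        nn[of v] by (cases "A v = 0") (auto simp: w_def)
  qed
  define K where "K = (norm B)^2 * norm A"
  have K0: "K \<ge> 0" by (simp add: K_def)
  have "(norm v)^2 \<le> (K + 1) * inner v (A v)" for v
  proof -
    have "v = B (A v)" using B by (metis blinfun_apply_blinfun_compose id_blinfun.rep_eq id_apply)
    then have "norm v \<le> norm B * norm (A v)" by (metis norm_blinfun)
    then have "(norm v)^2 \<le> (norm B * norm (A v))^2" by (simp add: power_mono)
    also have "\<dots> = (norm B)^2 * (norm (A v))^2" by (simp add: power_mult_distrib)
    also have "\<dots> \<le> (norm B)^2 * (norm A * inner v (A v))" by (intro mult_left_mono k1) auto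
    also have "\<dots> = K * inner v (A v)" by (simp add: K_def)
    also have "\<dots> \<le> (K + 1) * inner v (A v)" using nn[of v] by (simp add: algebra_simps)
    finally show ?thesis .
  qed
  then have "\<forall>v. (1/(K+1)) * (norm v)^2 \<le> inner v (A v)"
    using K0 by (simp add: field_simps)
  then show ?thesis using K0 by (intro exI[of _ "1/(K+1)"]) auto
qed


lemma positive_op_iff:
  "positive_op J A \<longleftrightarrow> (\<forall>v. A (J v) = J (A v)) \<and> (\<forall>x. inner x (J (A x)) = 0) \<and> (\<forall>x. inner x (A x) \<ge> 0)"
  unfolding positive_op_def cpx_linear_iff cinner_def by auto

lemma coercive_op_invertible:
  fixes A :: "'a::{real_inner,complete_space} \<Rightarrow>\<^sub>L 'a"
  assumes J: "complex_structure J" and P: "positive_op J A"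
    and t: "t > 0" and lb: "\<And>v. t * (norm v)^2 \<le> inner v (A v)"
  shows "op_invertible J A"
proof -
  obtain B where B1: "B o\<^sub>L A = id_blinfun" and B2: "A o\<^sub>L B = id_blinfun"
    using coercive_invertible[OF pos_sym[OF J P] t lb] by blast
  have BA: "\<And>v. B (A v) = v" using B1 by (metis blinfun_apply_blinfun_compose id_blinfun.rep_eq id_apply)
  have AB: "\<And>v. A (B v) = v" using B2 by (metis blinfun_apply_blinfun_compose id_blinfun.rep_eq id_apply)
  have cl: "\<And>v. A (J v) = J (A v)" using P unfolding positive_op_iff by auto
  have "\<And>v. B (J v) = J (B v)"
  proof -
    fix v
    have "B (J v) = B (J (A (B v)))" by (simp add: AB)
    also have "\<dots> = B (A (J (B v)))" by (simp add: cl)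
    also have "\<dots> = J (B v)" by (simp add: BA)
    finally show "B (J v) = J (B v)" .
  qed
  then show ?thesis unfolding op_invertible_def cpx_linear_iff using B1 B2 by blast
qed

lemma spec0: "0 \<in> op_spectrum J A \<longleftrightarrow> \<not> op_invertible J A"
  by (simp add: op_spectrum_def cscalar_def)

lemma povmsD:
  assumes "M \<in> povms J N"
  shows "\<And>j. j \<in> {1..N} \<Longrightarrow> positive_op J (M j)" "(\<Sum>j=1..N. M j) = id_blinfun"
    "\<And>j. j \<notin> {1..N} \<Longrightarrow> M j = 0"
  using assms unfolding povms_def by auto

lemma povm_le_id:
  assumes "x \<in> povms J N" "j \<in> {1..N}"
  shows "inner v (x j v) \<le> (norm v)^2"
proof -
  have "(norm v)^2 = inner v ((\<Sum>i=1..N. x i) v)"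
    using povmsD(2)[OF assms(1)] by (simp add: power2_norm_eq_inner)
  also have "\<dots> = (\<Sum>i=1..N. inner v (x i v))" by (simp add: blinfun.sum_left inner_sum_right)
  finally have e: "(norm v)^2 = (\<Sum>i=1..N. inner v (x i v))" .
  have "inner v (x j v) \<le> (\<Sum>i=1..N. inner v (x i v))"
    by (rule member_le_sum) (use assms povmsD(1)[OF assms(1)] pos_nonneg in auto)
  then show ?thesis using e by simp
qed


lemma interior_leC:
  fixes J :: "'a::{real_inner, complete_space} \<Rightarrow>\<^sub>L 'a"
  assumes J: "complex_structure J" and N: "N \<ge> 1"
    and M: "M \<in> povms J N" and inv: "\<forall>j\<in>{1..N}. op_invertible J (M j)"
    and x: "x \<in> povms J N"
  shows "leC (povms J N) x M"
proof -
  have "\<forall>j\<in>{1..N}. \<exists>c>0. \<forall>v. c * (norm v)^2 \<le> inner v (M j v)"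
  proof
    fix j assume j: "j \<in> {1..N}"
    have P: "positive_op J (M j)" using povmsD(1)[OF M j] .
    obtain B where "B o\<^sub>L M j = id_blinfun" using inv j unfolding op_invertible_def by blast
    then show "\<exists>c>0. \<forall>v. c * (norm v)^2 \<le> inner v (M j v)"
      using invertible_coercive[OF pos_sym[OF J P] pos_nonneg[OF P]] by blast
  qed
  then obtain cf where cf: "\<forall>j\<in>{1..N}. cf j > 0 \<and> (\<forall>v. cf j * (norm v)^2 \<le> inner v (M j v))"
    by metis
  define c0 where "c0 = Min (cf ` {1..N})"
  have ne: "{1..N} \<noteq> {}" using N by auto
  have c0p: "c0 > 0" unfolding c0_def using cf ne by (subst Min_gr_iff) auto
  have c0le: "\<And>j. j \<in> {1..N} \<Longrightarrow> c0 \<le> cf j" unfolding c0_def by (intro Min_le) auto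
  define t where "t = min c0 1 / 2"
  have tp: "t > 0" "t \<le> 1/2" "t \<le> c0" using c0p by (auto simp: t_def)
  have t1: "1 - t > 0" using tp by simp
  define z where "z j = (1/(1-t)) *\<^sub>R (M j - t *\<^sub>R x j)" for j
  have zv: "\<And>j v. z j v = (1/(1-t)) *\<^sub>R (M j v - t *\<^sub>R x j v)"
    by (simp add: z_def scaleR_blinfun.rep_eq minus_blinfun.rep_eq)
  have zpos: "positive_op J (z j)" if j: "j \<in> {1..N}" for j
  proof -
    have PM: "positive_op J (M j)" using povmsD(1)[OF M j] .
    have Px: "positive_op J (x j)" using povmsD(1)[OF x j] .
    show ?thesis unfolding positive_op_iff
    proof (intro conjI allI)
      fix v
      show "z j (J v) = J (z j v)"
        using PM Px by (simp add: zv positive_op_iff blinfun.scaleR_right blinfun.diff_right)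
    next
      fix v
      show "inner v (J (z j v)) = 0"
        using PM Px by (simp add: zv positive_op_iff blinfun.scaleR_right blinfun.diff_right
            inner_diff_right)
    next
      fix v
      have "t * inner v (x j v) \<le> t * (norm v)^2"
        using povm_le_id[OF x j] tp by (intro mult_left_mono) auto
      also have "\<dots> \<le> cf j * (norm v)^2" using tp c0le[OF j] by (intro mult_right_mono) auto
      also have "\<dots> \<le> inner v (M j v)" using cf j by auto
      finally have "0 \<le> inner v (M j v) - t * inner v (x j v)" by simp
      then show "0 \<le> inner v (z j v)"
        using t1 by (simp add: zv inner_diff_right)
    qed
  qed
  have zsum: "(\<Sum>j=1..N. z j) = id_blinfun"
  proof -
    have "(\<Sum>j=1..N. z j) = (1/(1-t)) *\<^sub>R ((\<Sum>j=1..N. M j) - t *\<^sub>R (\<Sum>j=1..N. x j))"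
      by (simp add: z_def scaleR_sum_right[symmetric] sum_subtractf)
    also have "\<dots> = (1/(1-t)) *\<^sub>R ((1 - t) *\<^sub>R id_blinfun)"
      using povmsD(2)[OF M] povmsD(2)[OF x] by (simp add: algebra_simps)
    also have "\<dots> = id_blinfun" using t1 by simp
    finally show ?thesis .
  qed
  have zout: "z j = 0" if "j \<notin> {1..N}" for j
    using povmsD(3)[OF M that] povmsD(3)[OF x that] by (simp add: z_def)
  have zP: "z \<in> povms J N" unfolding povms_def using zpos zsum zout by auto
  have "\<forall>j. M j = t *\<^sub>R x j + (1 - t) *\<^sub>R z j"
    using t1 by (simp add: z_def)
  then show ?thesis unfolding leC_def using zP tp by (intro bexI[of _ z]) auto
qed

lemma boundary_of_singular:
  fixes J :: "'a::{real_inner, complete_space} \<Rightarrow>\<^sub>L 'a"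
  assumes J: "complex_structure J"
    and M: "M \<in> povms J N" and j: "j \<in> {1..N}" and ninv: "\<not> op_invertible J (M j)"
  shows "M \<in> cboundary (povms J N)"
proof -
  define x where "x i = (if i = j then id_blinfun else (0 :: 'a \<Rightarrow>\<^sub>L 'a))" for i
  have xP: "x \<in> povms J N"
    unfolding povms_def
  proof (intro CollectI conjI ballI allI impI)
    fix i assume "i \<in> {1..N}"
    show "positive_op J (x i)"
      unfolding positive_op_iff x_def using inner_J_self[OF J] by auto
  next
    show "(\<Sum>i=1..N. x i) = id_blinfun" using j by (simp add: x_def)
  next
    fix i assume "i \<notin> {1..N}" then show "x i = 0" using j by (auto simp: x_def)
  qed
  have "\<not> leC (povms J N) x M"
  proof
    assume "leC (povms J N) x M"
    then obtain z t where zP: "z \<in> povms J N" and t: "0 < t" "t \<le> 1"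
      and eq: "\<forall>i. M i = t *\<^sub>R x i + (1 - t) *\<^sub>R z i" unfolding leC_def by blast
    have Mj: "M j = t *\<^sub>R id_blinfun + (1 - t) *\<^sub>R z j" using eq by (simp add: x_def)
    have Pz: "positive_op J (z j)" using povmsD(1)[OF zP j] .
    have "t * (norm v)^2 \<le> inner v (M j v)" for v
    proof -
      have "0 \<le> (1 - t) * inner v (z j v)" using t pos_nonneg[OF Pz, of v] by simp
      then show ?thesis
        by (simp add: Mj plus_blinfun.rep_eq scaleR_blinfun.rep_eq inner_add_right
            power2_norm_eq_inner)
    qed
    then have "op_invertible J (M j)"
      using coercive_op_invertible[OF J povmsD(1)[OF M j] t(1)] by blast
    with ninv show False by simp
  qed
  then show ?thesis unfolding cboundary_def using M xP by blast
qed

theorem proposition13: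
  fixes J :: "'a::{real_inner, complete_space} \<Rightarrow>\<^sub>L 'a" and N :: nat
  assumes "complex_structure J" and "N \<ge> 1"
  shows "cboundary (povms J N) =
           {M \<in> povms J N. \<exists>j\<in>{1..N}. (0::complex) \<in> op_spectrum J (M j)}"
proof (rule equalityI; rule subsetI)
  fix M assume Mb: "M \<in> cboundary (povms J N)"
  then have M: "M \<in> povms J N" and ex: "\<exists>x\<in>povms J N. \<not> leC (povms J N) x M"
    unfolding cboundary_def by auto
  have "\<exists>j\<in>{1..N}. \<not> op_invertible J (M j)"
    using interior_leC[OF assms M _] ex by blast
  then show "M \<in> {M \<in> povms J N. \<exists>j\<in>{1..N}. (0::complex) \<in> op_spectrum J (M j)}"
    using M by (simp add: spec0)
next
  fix M assume "M \<in> {M \<in> povms J N. \<exists>j\<in>{1..N}. (0::complex) \<in> op_spectrum J (M j)}"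
  then show "M \<in> cboundary (povms J N)"
    using boundary_of_singular[OF assms(1)] by (auto simp: spec0)
qed

end
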